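(* Let $R$, $G$, $*$, $\sigma$ and $\mathcal{S}$ be as in the context. If $\mathcal{S}$ is anticommutative, then $\operatorname{char}(R)=4$ or $\operatorname{char}(R)=8$.
   Context: Throughout, $R$ is a commutative ring with unity with $\operatorname{char}(R)\neq 2$, and $\mathcal{U}(R)$ is its unit group. $G$ is a group with an involution $*$, i.e. a map $x\mapsto x^*$ with $(xy)^*=y^*x^*$ and $(x^* )^*=x$. The map $\sigma:G\to\mathcal{U}(R)$ is a nontrivial group homomorphism with kernel $N=\ker\sigma$, and it is compatible with $*$: $xx^*\in N$ for all $x\in G$. The group ring $RG$ carries the involution $\left(\sum_{x\in G}\alpha_x x\right)^{\sigma*}=\sum_{x\in G}\sigma(x)\alpha_x x^*$. Write $G_*=\{x\in G: x^*=x\}$ and $N_*=G_*\cap N$. Let $\mathcal{S}$ be the $R$-submodule of $RG$ spanned by the union of the following three sets: - $2\mathcal{S}_1=\{2x: x\in N_*\}$; - $\mathcal{S}_2=\{\alpha x: x\in G_*\setminus N,\ \alpha\in R,\ \alpha(1-\sigma(x))=0\}$; - $\mathcal{S}_3=\{x+\sigma(x)x^*: x\in G\setminus G_*\}$. $\mathcal{S}$ is called anticommutative if $ab+ba=0$ for all $a,b\in\mathcal{S}$. *)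

theory Defs
  imports "HOL-Algebra.Group"
begin

text \<open>Elements of the group ring RG are represented as functions g => r
(coefficient functions) with finite support contained in carrier G.\<close>

definition gr_basis :: "'g \<Rightarrow> ('g \<Rightarrow> 'r::comm_ring_1)" where
  "gr_basis x = (\<lambda>y. if y = x then 1 else 0)"

definition gr_smult :: "'r::comm_ring_1 \<Rightarrow> ('g \<Rightarrow> 'r) \<Rightarrow> ('g \<Rightarrow> 'r)" where
  "gr_smult c f = (\<lambda>y. c * f y)"

definition gr_add :: "('g \<Rightarrow> 'r::comm_ring_1) \<Rightarrow> ('g \<Rightarrow> 'r) \<Rightarrow> ('g \<Rightarrow> 'r)" where
  "gr_add f h = (\<lambda>y. f y + h y)"

definition gr_mult :: "('g, 'b) monoid_scheme \<Rightarrow> ('g \<Rightarrow> 'r::comm_ring_1) \<Rightarrow> ('g \<Rightarrow> 'r) \<Rightarrow> ('g \<Rightarrow> 'r)" where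
  "gr_mult G a b = (\<lambda>z. \<Sum>(x, y) \<in> {(x, y). x \<in> carrier G \<and> y \<in> carrier G \<and> a x \<noteq> 0 \<and> b y \<noteq> 0
                                     \<and> x \<otimes>\<^bsub>G\<^esub> y = z}. a x * b y)"

definition is_involution :: "('g, 'b) monoid_scheme \<Rightarrow> ('g \<Rightarrow> 'g) \<Rightarrow> bool" where
  "is_involution G star \<longleftrightarrow>
     (\<forall>x \<in> carrier G. star x \<in> carrier G) \<and>
     (\<forall>x \<in> carrier G. \<forall>y \<in> carrier G. star (x \<otimes>\<^bsub>G\<^esub> y) = star y \<otimes>\<^bsub>G\<^esub> star x) \<and>
     (\<forall>x \<in> carrier G. star (star x) = x)"

definition unit_hom :: "('g, 'b) monoid_scheme \<Rightarrow> ('g \<Rightarrow> 'r::comm_ring_1) \<Rightarrow> bool" where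
  "unit_hom G \<sigma> \<longleftrightarrow>
     (\<forall>x \<in> carrier G. \<sigma> x dvd 1) \<and>
     (\<forall>x \<in> carrier G. \<forall>y \<in> carrier G. \<sigma> (x \<otimes>\<^bsub>G\<^esub> y) = \<sigma> x * \<sigma> y)"

definition sym_elems :: "('g, 'b) monoid_scheme \<Rightarrow> ('g \<Rightarrow> 'g) \<Rightarrow> 'g set" where
  "sym_elems G star = {x \<in> carrier G. star x = x}"

definition ker_sigma :: "('g, 'b) monoid_scheme \<Rightarrow> ('g \<Rightarrow> 'r::comm_ring_1) \<Rightarrow> 'g set" where
  "ker_sigma G \<sigma> = {x \<in> carrier G. \<sigma> x = 1}"

definition S_gens :: "('g, 'b) monoid_scheme \<Rightarrow> ('g \<Rightarrow> 'g) \<Rightarrow> ('g \<Rightarrow> 'r::comm_ring_1) \<Rightarrow> ('g \<Rightarrow> 'r) set" where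
  "S_gens G star \<sigma> =
     {gr_smult 2 (gr_basis x) | x. x \<in> sym_elems G star \<inter> ker_sigma G \<sigma>}
     \<union> {gr_smult \<alpha> (gr_basis x) | x \<alpha>. x \<in> sym_elems G star - ker_sigma G \<sigma> \<and> \<alpha> * (1 - \<sigma> x) = 0}
     \<union> {gr_add (gr_basis x) (gr_smult (\<sigma> x) (gr_basis (star x))) | x. x \<in> carrier G - sym_elems G star}"

inductive_set gr_span :: "('g \<Rightarrow> 'r::comm_ring_1) set \<Rightarrow> ('g \<Rightarrow> 'r) set" for A where
  zero: "(\<lambda>_. 0) \<in> gr_span A"
| gen: "a \<in> A \<Longrightarrow> a \<in> gr_span A"
| add: "a \<in> gr_span A \<Longrightarrow> b \<in> gr_span A \<Longrightarrow> gr_add a b \<in> gr_span A"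
| smult: "a \<in> gr_span A \<Longrightarrow> gr_smult c a \<in> gr_span A"

definition S_set :: "('g, 'b) monoid_scheme \<Rightarrow> ('g \<Rightarrow> 'g) \<Rightarrow> ('g \<Rightarrow> 'r::comm_ring_1) \<Rightarrow> ('g \<Rightarrow> 'r) set" where
  "S_set G star \<sigma> = gr_span (S_gens G star \<sigma>)"

definition anticommutative :: "('g, 'b) monoid_scheme \<Rightarrow> ('g \<Rightarrow> 'r::comm_ring_1) set \<Rightarrow> bool" where
  "anticommutative G S \<longleftrightarrow>
     (\<forall>a \<in> S. \<forall>b \<in> S. gr_add (gr_mult G a b) (gr_mult G b a) = (\<lambda>_. 0))"

end

theory Submission
  imports Defs
begin

lemma dvd8_cases: "(c::nat) dvd 8 \<Longrightarrow> c \<in> {1,2,4,8}"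
proof -
  assume "c dvd 8"
  then have "c \<le> 8" by (auto dest: dvd_imp_le)
  then have "c = 0 \<or> c = 1 \<or> c = 2 \<or> c = 3 \<or> c = 4 \<or> c = 5 \<or> c = 6 \<or> c = 7 \<or> c = 8" by linarith
  then show ?thesis using \<open>c dvd 8\<close> by auto
qed

theorem lemma3p2:
  fixes G :: "('g, 'b) monoid_scheme"
    and star :: "'g \<Rightarrow> 'g"
    and \<sigma> :: "'g \<Rightarrow> 'r::comm_ring_1"
  assumes "group G"
    and "CHAR('r) \<noteq> 2"
    and "is_involution G star"
    and "unit_hom G \<sigma>"
    and "\<exists>x \<in> carrier G. \<sigma> x \<noteq> 1"
    and "\<forall>x \<in> carrier G. \<sigma> (x \<otimes>\<^bsub>G\<^esub> star x) = 1"
    and "anticommutative G (S_set G star \<sigma>)"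
  shows "CHAR('r) = 4 \<or> CHAR('r) = 8"
proof -
  interpret group G by fact
  have one: "\<one>\<^bsub>G\<^esub> \<in> carrier G" by simp
  have sc: "star \<one>\<^bsub>G\<^esub> \<in> carrier G" using assms(3) one unfolding is_involution_def by blast
  have "star \<one>\<^bsub>G\<^esub> = star \<one>\<^bsub>G\<^esub> \<otimes>\<^bsub>G\<^esub> star \<one>\<^bsub>G\<^esub>"
    using assms(3) one unfolding is_involution_def by (metis l_one)
  then have "star \<one>\<^bsub>G\<^esub> \<otimes>\<^bsub>G\<^esub> \<one>\<^bsub>G\<^esub> = star \<one>\<^bsub>G\<^esub> \<otimes>\<^bsub>G\<^esub> star \<one>\<^bsub>G\<^esub>"
    using sc by simp
  then have s1: "star \<one>\<^bsub>G\<^esub> = \<one>\<^bsub>G\<^esub>" using sc one by (metis l_cancel_one')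
  have sig1: "\<sigma> \<one>\<^bsub>G\<^esub> = 1" using assms(6) one s1 by (metis l_one)
  define a :: "'g \<Rightarrow> 'r" where "a = gr_smult 2 (gr_basis \<one>\<^bsub>G\<^esub>)"
  have "a \<in> S_gens G star \<sigma>"
    unfolding a_def S_gens_def sym_elems_def ker_sigma_def using one s1 sig1 by blast
  then have aS: "a \<in> S_set G star \<sigma>" unfolding S_set_def by (rule gr_span.gen)
  have "gr_add (gr_mult G a a) (gr_mult G a a) = (\<lambda>_. 0)"
    using assms(7) aS unfolding anticommutative_def by blast
  then have z: "gr_mult G a a \<one>\<^bsub>G\<^esub> + gr_mult G a a \<one>\<^bsub>G\<^esub> = 0"
    unfolding gr_add_def by meson
  have eight: "(8::'r) = 0"
  proof (cases "(2::'r) = 0")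
    case True
    have "(8::'r) = 4 * 2" by simp
    then show ?thesis using True by simp
  next
    case False
    have av: "a x = (if x = \<one>\<^bsub>G\<^esub> then 2 else 0)" for x
      unfolding a_def gr_smult_def gr_basis_def by simp
    have "{(x, y). x \<in> carrier G \<and> y \<in> carrier G \<and> a x \<noteq> 0 \<and> a y \<noteq> 0
            \<and> x \<otimes>\<^bsub>G\<^esub> y = \<one>\<^bsub>G\<^esub>} = {(\<one>\<^bsub>G\<^esub>, \<one>\<^bsub>G\<^esub>)}"
      using False one by (auto simp: av split: if_splits)
    then have "gr_mult G a a \<one>\<^bsub>G\<^esub> = 4"
      unfolding gr_mult_def by (simp add: av)
    then show ?thesis using z by simp
  qed
  then have "of_nat 8 = (0::'r)" by simp
  then have "CHAR('r) dvd 8" by (simp only: of_nat_eq_0_iff_char_dvd)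
  then have c: "CHAR('r) \<in> {1,2,4,8}" by (rule dvd8_cases)
  have "CHAR('r) \<noteq> 1"
  proof
    assume "CHAR('r) = 1"
    then have "of_nat 1 = (0::'r)" by (simp only: of_nat_eq_0_iff_char_dvd) simp
    then have "(1::'r) = 0" by simp
    then have "\<And>u::'r. u = 1" by (metis mult_1 mult_zero_left)
    then show False using assms(5) by blast
  qed
  then show ?thesis using c assms(2) by auto
qed

end
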